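(* Let $G$ be a graph and let $X,Y\subset V(G)$. Suppose that $X$ is $\alpha$-cut-linked in $G$ for some $\alpha>0$, and that there exists a collection $\mathcal{Q}$ of pairwise vertex-disjoint paths in $G$ between $X$ and $Y$ with $|\mathcal{Q}|=|Y|$. Then $Y$ is $\min\{1/2,\alpha/2\}$-cut-linked in $G$.
   Context: A set $X\subseteq V(G)$ is $\alpha$-cut-linked in $G$ if for every partition of $V(G)$ into $\{A,B\}$ we have $|E(A,B)|\geq\alpha\cdot\min\{|A\cap X|,|B\cap X|\}$, where $E(A,B)$ is the set of edges between $A$ and $B$. *)

theory Defs
  imports Main "HOL-Library.Extended_Real" Complex_Main
begin

definition graph :: "'a set \<Rightarrow> ('a \<Rightarrow> 'a \<Rightarrow> bool) \<Rightarrow> bool" where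
  "graph V E \<longleftrightarrow> finite V \<and> (\<forall>u v. E u v \<longrightarrow> u \<in> V \<and> v \<in> V \<and> u \<noteq> v \<and> E v u)"

definition cut_edges :: "('a \<Rightarrow> 'a \<Rightarrow> bool) \<Rightarrow> 'a set \<Rightarrow> 'a set \<Rightarrow> ('a \<times> 'a) set" where
  "cut_edges E A B = {(a, b). a \<in> A \<and> b \<in> B \<and> E a b}"

definition cut_linked :: "'a set \<Rightarrow> ('a \<Rightarrow> 'a \<Rightarrow> bool) \<Rightarrow> real \<Rightarrow> 'a set \<Rightarrow> bool" where
  "cut_linked V E \<alpha> X \<longleftrightarrow>
     (\<forall>A B. A \<union> B = V \<and> A \<inter> B = {} \<longrightarrow>
        real (card (cut_edges E A B)) \<ge> \<alpha> * real (min (card (A \<inter> X)) (card (B \<inter> X))))"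

definition is_path :: "'a set \<Rightarrow> ('a \<Rightarrow> 'a \<Rightarrow> bool) \<Rightarrow> 'a list \<Rightarrow> bool" where
  "is_path V E p \<longleftrightarrow> p \<noteq> [] \<and> distinct p \<and> set p \<subseteq> V \<and>
     (\<forall>i. Suc i < length p \<longrightarrow> E (p ! i) (p ! Suc i))"

definition path_between :: "'a set \<Rightarrow> ('a \<Rightarrow> 'a \<Rightarrow> bool) \<Rightarrow> 'a set \<Rightarrow> 'a set \<Rightarrow> 'a list \<Rightarrow> bool" where
  "path_between V E X Y p \<longleftrightarrow> is_path V E p \<and>
     ((hd p \<in> X \<and> last p \<in> Y) \<or> (hd p \<in> Y \<and> last p \<in> X))"

end

theory Submission
  imports Defs
begin

lemma crossing_edge:
  assumes p: "is_path V E p" and g: "graph V E" and AB: "A \<union> B = V" "A \<inter> B = {}"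
    and nA: "\<not> set p \<subseteq> A" and nB: "\<not> set p \<subseteq> B"
  shows "\<exists>e\<in>cut_edges E A B. fst e \<in> set p"
proof (rule ccontr)
  assume no: "\<not> (\<exists>e\<in>cut_edges E A B. fst e \<in> set p)"
  have ne: "p \<noteq> []" and sub: "set p \<subseteq> V" and ed: "\<And>i. Suc i < length p \<Longrightarrow> E (p ! i) (p ! Suc i)"
    using p unfolding is_path_def by auto
  have sym: "\<And>u v. E u v \<Longrightarrow> E v u" using g unfolding graph_def by blast
  have inV: "\<And>i. i < length p \<Longrightarrow> p ! i \<in> V" using sub nth_mem by blast
  have p0: "p ! 0 \<in> V" using inV ne by simp
  show False
  proof (cases "p ! 0 \<in> A")
    case True
    have "\<forall>i. i < length p \<longrightarrow> p ! i \<in> A"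
    proof
      fix i show "i < length p \<longrightarrow> p ! i \<in> A"
      proof (induction i)
        case 0 then show ?case using True by simp
      next
        case (Suc i)
        show ?case
        proof
          assume l: "Suc i < length p"
          then have a: "p ! i \<in> A" using Suc by simp
          have e: "E (p ! i) (p ! Suc i)" using ed l by blast
          have v: "p ! Suc i \<in> V" using inV l by blast
          show "p ! Suc i \<in> A"
          proof (rule ccontr)
            assume "p ! Suc i \<notin> A"
            then have "p ! Suc i \<in> B" using v AB by blast
            then have "(p ! i, p ! Suc i) \<in> cut_edges E A B" using a e unfolding cut_edges_def by simp
            moreover have "p ! i \<in> set p" using l by simp
            ultimately show False using no by force
          qed
        qed
      qed
    qed
    then have "set p \<subseteq> A" by (auto simp: set_conv_nth)
    then show False using nA by blast
  next
    case False
    then have T: "p ! 0 \<in> B" using p0 AB by blast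
    have "\<forall>i. i < length p \<longrightarrow> p ! i \<in> B"
    proof
      fix i show "i < length p \<longrightarrow> p ! i \<in> B"
      proof (induction i)
        case 0 then show ?case using T by simp
      next
        case (Suc i)
        show ?case
        proof
          assume l: "Suc i < length p"
          then have a: "p ! i \<in> B" using Suc by simp
          have e: "E (p ! Suc i) (p ! i)" using ed l sym by blast
          have v: "p ! Suc i \<in> V" using inV l by blast
          show "p ! Suc i \<in> B"
          proof (rule ccontr)
            assume "p ! Suc i \<notin> B"
            then have "p ! Suc i \<in> A" using v AB by blast
            then have "(p ! Suc i, p ! i) \<in> cut_edges E A B" using a e unfolding cut_edges_def by simp
            moreover have "p ! Suc i \<in> set p" using l by simp
            ultimately show False using no by force
          qed
        qed
      qed
    qed
    then have "set p \<subseteq> B" by (auto simp: set_conv_nth)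
    then show False using nB by blast
  qed
qed

lemma side_bound:
  fixes Q :: "'a list set"
  assumes fQ: "finite Q" and fV: "finite V"
    and disj: "\<forall>p\<in>Q. \<forall>q\<in>Q. p \<noteq> q \<longrightarrow> set p \<inter> set q = {}"
    and yend: "\<forall>p\<in>Q. yend p \<in> Y \<and> yend p \<in> set p"
    and xend: "\<forall>p\<in>Q. xend p \<in> X \<and> xend p \<in> set p"
    and surj: "Y \<subseteq> yend ` Q"
    and AB: "A \<inter> B = {}" "A \<subseteq> V"
    and nc: "\<forall>p\<in>Q. p \<notin> C \<longrightarrow> set p \<subseteq> A \<or> set p \<subseteq> B"
    and CQ: "C \<subseteq> Q"
  shows "card (A \<inter> Y) \<le> card (A \<inter> X) + card C"
proof -
  let ?QA = "{p\<in>Q. set p \<subseteq> A}"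
  have "A \<inter> Y \<subseteq> yend ` (?QA \<union> C)"
  proof
    fix y assume y: "y \<in> A \<inter> Y"
    then obtain p where p: "p \<in> Q" "y = yend p" using surj by blast
    have "p \<in> ?QA \<union> C"
    proof (cases "p \<in> C")
      case False
      then have "set p \<subseteq> A \<or> set p \<subseteq> B" using nc p by blast
      moreover have "y \<in> set p" using yend p by blast
      ultimately show ?thesis using y AB p by blast
    qed simp
    then show "y \<in> yend ` (?QA \<union> C)" using p by blast
  qed
  then have "card (A \<inter> Y) \<le> card (yend ` (?QA \<union> C))"
  proof -
    have "finite (?QA \<union> C)" using fQ CQ finite_subset by auto
    then have "finite (yend ` (?QA \<union> C))" by simp
    then show ?thesis using card_mono \<open>A \<inter> Y \<subseteq> yend ` (?QA \<union> C)\<close> by blast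
  qed
  also have "\<dots> \<le> card (?QA \<union> C)" by (rule card_image_le) (use fQ CQ finite_subset in auto)
  also have "\<dots> \<le> card ?QA + card C" by (rule card_Un_le)
  also have "card ?QA \<le> card (A \<inter> X)"
  proof -
    have "inj_on xend ?QA"
      using disj xend by (auto simp: inj_on_def) (metis disjoint_iff)
    moreover have "xend ` ?QA \<subseteq> A \<inter> X" using xend by auto
    moreover have "finite (A \<inter> X)" using fV AB by (meson finite_Int finite_subset)
    ultimately show ?thesis by (meson card_inj_on_le)
  qed
  finally show ?thesis by simp
qed

theorem lemma11:
  fixes V :: "'a set" and E :: "'a \<Rightarrow> 'a \<Rightarrow> bool" and X Y :: "'a set"
    and \<alpha> :: real and Q :: "'a list set"
  assumes "graph V E"
    and "X \<subseteq> V" and "Y \<subseteq> V"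
    and "\<alpha> > 0"
    and "cut_linked V E \<alpha> X"
    and "\<forall>p\<in>Q. path_between V E X Y p"
    and "\<forall>p\<in>Q. \<forall>q\<in>Q. p \<noteq> q \<longrightarrow> set p \<inter> set q = {}"
    and "card Q = card Y"
  shows "cut_linked V E (min (1/2) (\<alpha>/2)) Y"
proof -
  note g = assms(1)
  have fV: "finite V" using g unfolding graph_def by blast
  have fY: "finite Y" using assms(3) fV finite_subset by blast
  show ?thesis
  proof (cases "Y = {}")
    case True
    then show ?thesis unfolding cut_linked_def by simp
  next
    case Yne: False
    have fQ: "finite Q" using assms(8) Yne fY card_eq_0_iff by force
    define yend where "yend p = (if hd p \<in> Y then hd p else last p)" for p :: "'a list"
    define xend where "xend p = (if hd p \<in> Y \<and> last p \<in> X then last p else hd p)" for p :: "'a list"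
    have pne: "\<forall>p\<in>Q. p \<noteq> []" using assms(6) unfolding path_between_def is_path_def by blast
    have yend: "\<forall>p\<in>Q. yend p \<in> Y \<and> yend p \<in> set p"
      using assms(6) pne unfolding path_between_def yend_def by auto
    have xend: "\<forall>p\<in>Q. xend p \<in> X \<and> xend p \<in> set p"
      using assms(6) pne unfolding path_between_def xend_def by auto
    have disj: "\<forall>p\<in>Q. \<forall>q\<in>Q. p \<noteq> q \<longrightarrow> set p \<inter> set q = {}" using assms(7) .
    have injy: "inj_on yend Q"
      using disj yend by (auto simp: inj_on_def) (metis disjoint_iff)
    have "yend ` Q = Y"
    proof (rule card_subset_eq)
      show "finite Y" using fY .
      show "yend ` Q \<subseteq> Y" using yend by auto
      show "card (yend ` Q) = card Y" using card_image[OF injy] assms(8) by simp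
    qed
    then have surj: "Y \<subseteq> yend ` Q" by simp
    show ?thesis unfolding cut_linked_def
    proof (intro allI impI)
      fix A B assume AB: "A \<union> B = V \<and> A \<inter> B = {}"
      define C where "C = {p\<in>Q. \<not> set p \<subseteq> A \<and> \<not> set p \<subseteq> B}"
      define f where "f p = (SOME e. e \<in> cut_edges E A B \<and> fst e \<in> set p)" for p
      have fC: "\<forall>p\<in>C. f p \<in> cut_edges E A B \<and> fst (f p) \<in> set p"
      proof
        fix p assume pC: "p \<in> C"
        have "\<exists>e\<in>cut_edges E A B. fst e \<in> set p"
          apply (rule crossing_edge[of V E p])
          using pC assms(6) g AB unfolding C_def path_between_def by auto
        then show "f p \<in> cut_edges E A B \<and> fst (f p) \<in> set p"
          unfolding f_def by (rule bexE) (rule someI, blast)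
      qed
      have injf: "inj_on f C"
        using fC disj unfolding C_def inj_on_def by (metis (no_types, lifting) disjoint_iff mem_Collect_eq)
      have fcut: "finite (cut_edges E A B)"
      proof (rule finite_subset)
        show "cut_edges E A B \<subseteq> V \<times> V" using AB unfolding cut_edges_def by auto
        show "finite (V \<times> V)" using fV by simp
      qed
      have c1: "card C \<le> card (cut_edges E A B)"
        using card_inj_on_le[OF injf _ fcut] fC by blast
      have CQ: "C \<subseteq> Q" unfolding C_def by blast
      have c2: "card (A \<inter> Y) \<le> card (A \<inter> X) + card C"
        by (rule side_bound[OF fQ fV disj yend xend surj, of A B C]) (use AB CQ in \<open>auto simp: C_def\<close>)
      have c3: "card (B \<inter> Y) \<le> card (B \<inter> X) + card C"
        by (rule side_bound[OF fQ fV disj yend xend surj, of B A C]) (use AB CQ in \<open>auto simp: C_def\<close>)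
      have c4: "real (card (cut_edges E A B)) \<ge> \<alpha> * real (min (card (A \<inter> X)) (card (B \<inter> X)))"
        using assms(5) AB unfolding cut_linked_def by blast
      define e where "e = real (card (cut_edges E A B))"
      define c where "c = real (card C)"
      define m where "m = real (min (card (A \<inter> Y)) (card (B \<inter> Y)))"
      define mx where "mx = real (min (card (A \<inter> X)) (card (B \<inter> X)))"
      have h1: "c \<le> e" using c1 unfolding c_def e_def by simp
      have h2: "\<alpha> * mx \<le> e" using c4 unfolding mx_def e_def by simp
      have h3: "m - c \<le> mx" using c2 c3 unfolding m_def c_def mx_def by linarith
      have m0: "m \<ge> 0" unfolding m_def by simp
      have "min (1/2) (\<alpha>/2) * m \<le> e"
      proof (cases "2 * c \<ge> m")
        case True
        have "min (1/2) (\<alpha>/2) * m \<le> (1/2) * m" using m0 by (intro mult_right_mono) auto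
        then show ?thesis using True h1 by linarith
      next
        case False
        have "min (1/2) (\<alpha>/2) * m \<le> (\<alpha>/2) * m" using m0 by (intro mult_right_mono) auto
        also have "\<dots> \<le> \<alpha> * (m - c)" proof -
          have "\<alpha> * c \<le> \<alpha> * (m/2)" using False assms(4) by (intro mult_left_mono) auto
          then show ?thesis by (simp add: algebra_simps)
        qed
        also have "\<dots> \<le> \<alpha> * mx" using h3 assms(4) by simp
        finally show ?thesis using h2 by linarith
      qed
      then show "min (1/2) (\<alpha>/2) * real (min (card (A \<inter> Y)) (card (B \<inter> Y))) \<le> real (card (cut_edges E A B))"
        unfolding m_def e_def .
    qed
  qed
qed

end
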